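(* For a non-negative integer $n$ and real numbers $p,x$, define \[ G_n(p,x)=\sum_{i=0}^n\binom{n}{i}\big((1-x)p+ix/n\big)^i\big(1-(1-x)p-ix/n\big)^{n-i}. \] Then for all non-negative integers $n$ and all real numbers $x$ and $p$, $G_n(p,x)=G_n(0,x)$.
   Context: Conventions: $0^0=1$; when $i=n=0$, the quantity $ix/n$ is interpreted with $0/0=1$ (so $G_0(p,x)=1$). *)

theory Defs
  imports Complex_Main
begin

text \<open>The ratio i x / n, with the paper's convention that 0/0 = 1 when i = n = 0.\<close>
definition ratio :: "nat \<Rightarrow> nat \<Rightarrow> real \<Rightarrow> real" where
  "ratio i n x = (if i = 0 \<and> n = 0 then 1 else real i * x / real n)"

definition G :: "nat \<Rightarrow> real \<Rightarrow> real \<Rightarrow> real" where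
  "G n p x = (\<Sum>i = 0..n. real (n choose i) *
      ((1 - x) * p + ratio i n x) ^ i * (1 - (1 - x) * p - ratio i n x) ^ (n - i))"

end

theory Submission
  imports Defs
begin

definition FF :: "nat \<Rightarrow> real \<Rightarrow> real \<Rightarrow> real \<Rightarrow> real" where
  "FF m y c a = (\<Sum>i=0..m. real (m choose i) * (a + real i * y) ^ i * (c - a - real i * y) ^ (m - i))"

definition DD :: "nat \<Rightarrow> real \<Rightarrow> real \<Rightarrow> real \<Rightarrow> real" where
  "DD m y c a = (\<Sum>i=0..m. real (m choose i) * (real i * (a + real i * y) ^ (i - 1) * (c - a - real i * y) ^ (m - i)
     - real (m - i) * (a + real i * y) ^ i * (c - a - real i * y) ^ (m - i - 1)))"

lemma term_deriv: "((\<lambda>a. (k::real) * (a + b) ^ i * (c - a - b) ^ j) has_field_derivative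
   k * (real i * (a + b) ^ (i - 1) * (c - a - b) ^ j - real j * (a + b) ^ i * (c - a - b) ^ (j - 1))) (at a)"
  by (rule derivative_eq_intros refl)+ (simp add: algebra_simps)

lemma FF_deriv: "(FF m y c has_field_derivative DD m y c a) (at a)"
  unfolding FF_def DD_def
  apply (rule DERIV_sum)
  apply (rule term_deriv)
  done

lemma S1: "(\<Sum>i=0..Suc k. real (Suc k choose i) * (real i * (a + real i * y) ^ (i - 1) * (c - a - real i * y) ^ (Suc k - i)))
   = real (Suc k) * FF k y c (a + y)"
proof -
  have "(\<Sum>i=0..Suc k. real (Suc k choose i) * (real i * (a + real i * y) ^ (i - 1) * (c - a - real i * y) ^ (Suc k - i)))
     = (\<Sum>j=0..k. real (Suc k choose Suc j) * (real (Suc j) * (a + real (Suc j) * y) ^ j * (c - a - real (Suc j) * y) ^ (k - j)))"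
    by (subst sum.atLeast0_atMost_Suc_shift) (simp del: binomial_Suc_Suc of_nat_Suc)
  also have "\<dots> = (\<Sum>j=0..k. real (Suc k) * (real (k choose j) * (a + y + real j * y) ^ j * (c - (a + y) - real j * y) ^ (k - j)))"
  proof (rule sum.cong[OF refl])
    fix j assume "j \<in> {0..k}"
    have e: "real (Suc k choose Suc j) * real (Suc j) = real (Suc k) * real (k choose j)"
      by (metis Suc_times_binomial[of j k] of_nat_mult mult.commute)
    have "a + real (Suc j) * y = a + y + real j * y" "c - a - real (Suc j) * y = c - (a + y) - real j * y"
      by (simp_all add: algebra_simps)
    then show "real (Suc k choose Suc j) * (real (Suc j) * (a + real (Suc j) * y) ^ j * (c - a - real (Suc j) * y) ^ (k - j))
      = real (Suc k) * (real (k choose j) * (a + y + real j * y) ^ j * (c - (a + y) - real j * y) ^ (k - j))"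
      using e by (simp only: mult.assoc[symmetric])
  qed
  finally show ?thesis by (simp add: FF_def sum_distrib_left)
qed

lemma S2: "(\<Sum>i=0..Suc k. real (Suc k choose i) * (real (Suc k - i) * (a + real i * y) ^ i * (c - a - real i * y) ^ (Suc k - i - 1)))
   = real (Suc k) * FF k y c a"
proof -
  have "(\<Sum>i=0..Suc k. real (Suc k choose i) * (real (Suc k - i) * (a + real i * y) ^ i * (c - a - real i * y) ^ (Suc k - i - 1)))
     = (\<Sum>i=0..k. real (Suc k choose i) * (real (Suc k - i) * (a + real i * y) ^ i * (c - a - real i * y) ^ (Suc k - i - 1)))"
    by simp
  also have "\<dots> = (\<Sum>i=0..k. real (Suc k) * (real (k choose i) * (a + real i * y) ^ i * (c - a - real i * y) ^ (k - i)))"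
  proof (rule sum.cong[OF refl])
    fix i assume "i \<in> {0..k}"
    have e: "real (Suc k choose i) * real (Suc k - i) = real (Suc k) * real (k choose i)"
      using binomial_absorb_comp[of "Suc k" i] by (metis diff_Suc_1 of_nat_mult mult.commute)
    have "Suc k - i - 1 = k - i" by simp
    then show "real (Suc k choose i) * (real (Suc k - i) * (a + real i * y) ^ i * (c - a - real i * y) ^ (Suc k - i - 1))
      = real (Suc k) * (real (k choose i) * (a + real i * y) ^ i * (c - a - real i * y) ^ (k - i))"
      using e by (simp only: mult.assoc[symmetric])
  qed
  finally show ?thesis by (simp add: FF_def sum_distrib_left)
qed

lemma DDs: "DD (Suc k) y c a = real (Suc k) * FF k y c (a + y) - real (Suc k) * FF k y c a"
  apply (unfold DD_def S1[where a=a, symmetric] S2[where a=a, symmetric])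
  apply (unfold sum_subtractf[symmetric])
  apply (unfold right_diff_distrib)
  apply (rule refl)
  done

lemma FF_const: "\<forall>y c a b. FF m y c a = FF m y c b"
proof (induction m)
  case 0
  then show ?case by (simp add: FF_def)
next
  case (Suc k)
  show ?case
  proof (intro allI)
    fix y c a b
    have "\<forall>a. DERIV (FF (Suc k) y c) a :> 0"
    proof
      fix a
      have "FF k y c (a + y) = FF k y c a" using Suc.IH by blast
      then have "DD (Suc k) y c a = 0" unfolding DDs by simp
      then show "DERIV (FF (Suc k) y c) a :> 0" using FF_deriv[of "Suc k" y c a] by simp
    qed
    then show "FF (Suc k) y c a = FF (Suc k) y c b" by (rule DERIV_isconst_all)
  qed
qed

theorem lemma2p7:
  fixes n :: nat and p x :: real
  shows "G n p x = G n 0 x"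
proof (cases "n = 0")
  case True
  then show ?thesis by (simp add: G_def ratio_def)
next
  case False
  have "\<And>q. G n q x = FF n (x / real n) 1 ((1 - x) * q)"
    unfolding G_def FF_def ratio_def using False by (intro sum.cong) auto
  then show ?thesis using FF_const by metis
qed

end
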